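(* Let $\mathcal{X},\mathcal{Y}$ be finite, $p\in[1,\infty]$, $W$ a channel and $\tilde W$ a false channel from $\mathcal{X}$ to $\mathcal{Y}$, and let $\Delta_p=\|\tilde W-W\|_p$. If $\Delta_p\le\frac14$, then for every distribution $Q$ on $\mathcal{X}$, $$|\tilde I(Q,\tilde W)-I(Q,W)|\le2f_p(\Delta_p),$$ and $$|\tilde C(\tilde W)-C(W)|\le2f_p(\Delta_p),$$ where $f_p(t)=-t\,|\mathcal{Y}|^{1-1/p}\log\left(\frac{t}{|\mathcal{Y}|^{1/p}}\right)$ (with $1/p=0$ for $p=\infty$). Furthermore, $f_p$ is concave and non-decreasing on $[0,\frac14]$.
   Context: A channel is a conditional pmf $W(y|x)$; a false channel is any non-negative function $\tilde W(y|x)$. $I(Q,W)$ is mutual information of $Q(x)W(y|x)$ and $C(W)=\max_QI(Q,W)$. False mutual information: $\tilde I(Q,\tilde W)=\sum_{x,y}Q(x)\tilde W(y|x)\log\frac{\tilde W(y|x)}{\sum_{x'}Q(x')\tilde W(y|x')}$ with $0\log0=0$; false capacity $\tilde C(\tilde W)=\sup_Q\tilde I(Q,\tilde W)$. Norms: $\|f\|_p=(\sum_{x,y}|f(x,y)|^p)^{1/p}$ for $p<\infty$ and $\|f\|_\infty=\max_{x,y}|f(x,y)|$. *)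

theory Defs
  imports "HOL-Analysis.Analysis" "HOL-Library.Extended_Real"
begin

text \<open>Channels and false channels on finite alphabets 'x, 'y, stored as W x y = W(y|x).
  Logarithms are natural logarithms (the statement is base-invariant).\<close>

definition is_channel :: "('x::finite \<Rightarrow> 'y::finite \<Rightarrow> real) \<Rightarrow> bool" where
  "is_channel W \<longleftrightarrow> (\<forall>x y. 0 \<le> W x y) \<and> (\<forall>x. (\<Sum>y\<in>UNIV. W x y) = 1)"

definition is_false_channel :: "('x::finite \<Rightarrow> 'y::finite \<Rightarrow> real) \<Rightarrow> bool" where
  "is_false_channel W \<longleftrightarrow> (\<forall>x y. 0 \<le> W x y)"

definition is_distr :: "('x::finite \<Rightarrow> real) \<Rightarrow> bool" where
  "is_distr Q \<longleftrightarrow> (\<forall>x. 0 \<le> Q x) \<and> (\<Sum>x\<in>UNIV. Q x) = 1"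

definition false_MI :: "('x::finite \<Rightarrow> real) \<Rightarrow> ('x \<Rightarrow> 'y::finite \<Rightarrow> real) \<Rightarrow> real" where
  "false_MI Q W = (\<Sum>x\<in>UNIV. \<Sum>y\<in>UNIV.
     (if Q x * W x y = 0 then 0
      else Q x * W x y * ln (W x y / (\<Sum>x'\<in>UNIV. Q x' * W x' y))))"

definition MI :: "('x::finite \<Rightarrow> real) \<Rightarrow> ('x \<Rightarrow> 'y::finite \<Rightarrow> real) \<Rightarrow> real" where
  "MI Q W = false_MI Q W"

definition capacity :: "('x::finite \<Rightarrow> 'y::finite \<Rightarrow> real) \<Rightarrow> real" where
  "capacity W = (SUP Q\<in>{Q. is_distr Q}. MI Q W)"

definition false_capacity :: "('x::finite \<Rightarrow> 'y::finite \<Rightarrow> real) \<Rightarrow> real" where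
  "false_capacity W = (SUP Q\<in>{Q. is_distr Q}. false_MI Q W)"

definition pnorm :: "ereal \<Rightarrow> ('x::finite \<Rightarrow> 'y::finite \<Rightarrow> real) \<Rightarrow> real" where
  "pnorm p f = (if p = \<infinity> then Max {\<bar>f x y\<bar> | x y. True}
     else (\<Sum>x\<in>UNIV. \<Sum>y\<in>UNIV. \<bar>f x y\<bar> powr real_of_ereal p) powr (1 / real_of_ereal p))"

definition inv_p :: "ereal \<Rightarrow> real" where
  "inv_p p = (if p = \<infinity> then 0 else 1 / real_of_ereal p)"

definition f_p :: "ereal \<Rightarrow> nat \<Rightarrow> real \<Rightarrow> real" where
  "f_p p m t = - t * real m powr (1 - inv_p p) * ln (t / real m powr inv_p p)"

end

theory Submission imports Defs begin

lemma tang: fixes a b :: real assumes "0 \<le> a" "0 < b"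
  shows "a * ln b + a - b \<le> a * ln a"
proof (cases "a = 0")
  case True then show ?thesis using assms by simp
next
  case False
  hence a: "a > 0" using assms by simp
  have "ln (b/a) \<le> b/a - 1" using a assms by (intro ln_le_minus_one) simp
  hence "ln b - ln a \<le> b/a - 1" using a assms by (simp add: ln_div)
  hence "a * (ln b - ln a) \<le> a * (b/a - 1)" using a by (intro mult_left_mono) auto
  thus ?thesis using a by (simp add: algebra_simps)
qed

lemma superadd: fixes a d :: real assumes "0 \<le> a" "0 \<le> d"
  shows "a * ln a + d * ln d \<le> (a+d) * ln (a+d)"
proof (cases "a = 0 \<or> d = 0")
  case True then show ?thesis by auto
next
  case False
  hence "a > 0" "d > 0" using assms by auto
  hence "ln a \<le> ln (a+d)" "ln d \<le> ln (a+d)" by auto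
  hence "a * ln a \<le> a * ln (a+d)" "d * ln d \<le> d * ln (a+d)"
    using assms by (auto intro: mult_left_mono)
  thus ?thesis by (simp add: algebra_simps)
qed

lemma upper: fixes a b :: real assumes "0 \<le> a" "0 < b"
  shows "b * ln b - a * ln a \<le> (b - a) * (1 + ln b)"
  using tang[OF assms] by (simp add: algebra_simps)

lemma ln_quarter: "ln (1/4::real) \<le> -1"
proof -
  have "exp 1 \<le> (4::real)" using exp_le by simp
  hence "ln (exp 1) \<le> ln (4::real)" by (subst ln_le_cancel_iff) auto
  thus ?thesis by (simp add: ln_div)
qed

lemma ln_516: "ln (5/4::real) + ln (1/4) \<le> -1"
proof -
  have "exp 1 \<le> (16/5::real)" using exp_le by simp
  hence "ln (exp 1) \<le> ln (16/5::real)" by (subst ln_le_cancel_iff) auto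
  moreover have "ln (5/4::real) + ln (1/4) = ln (5/16)"
    using ln_mult[of "5/4::real" "1/4"] by simp
  moreover have "ln (5/16::real) = - ln (16/5)" by (simp add: ln_div)
  ultimately show ?thesis by simp
qed

lemma contA_aux: fixes a b :: real assumes "0 \<le> a" "a \<le> b" "b - a \<le> 1/4" "b \<le> 5/4"
  shows "\<bar>b * ln b - a * ln a\<bar> \<le> - (b-a) * ln (b-a)"
proof (cases "b = a")
  case True then show ?thesis by simp
next
  case False
  define d where "d = b - a"
  have d: "d > 0" "d \<le> 1/4" using False assms d_def by auto
  have lo: "a * ln a + d * ln d \<le> b * ln b" using superadd[of a d] assms d d_def by simp
  have "b > 0" using d d_def assms by simp
  hence lb: "ln b \<le> ln (5/4)" using assms by simp
  have "b * ln b - a * ln a \<le> d * (1 + ln b)" using upper[of a b] assms \<open>b > 0\<close> d_def by simp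
  also have "\<dots> \<le> d * (1 + ln (5/4))" using d lb by (intro mult_left_mono) auto
  also have "\<dots> \<le> - d * ln d"
  proof -
    have "ln d \<le> ln (1/4)" using d by simp
    hence "1 + ln (5/4) \<le> - ln d" using ln_516 by simp
    hence "d * (1 + ln (5/4)) \<le> d * (- ln d)" using d by (intro mult_left_mono) auto
    thus ?thesis by simp
  qed
  finally have U: "b * ln b - a * ln a \<le> - d * ln d" .
  have bd: "b - a = d" using d_def by simp
  show ?thesis unfolding bd abs_le_iff using U lo by linarith
qed

lemma contA: fixes a b :: real assumes "0 \<le> a" "0 \<le> b" "\<bar>b - a\<bar> \<le> 1/4" "a \<le> 5/4" "b \<le> 5/4"
  shows "\<bar>b * ln b - a * ln a\<bar> \<le> - \<bar>b-a\<bar> * ln \<bar>b-a\<bar>"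
proof (cases "a \<le> b")
  case True then show ?thesis using contA_aux[of a b] assms by simp
next
  case False then show ?thesis using contA_aux[of b a] assms by (simp add: abs_minus_commute)
qed

lemma phi_mono: fixes a b :: real assumes "0 \<le> a" "a \<le> b" "b \<le> 1/4"
  shows "- a * ln a \<le> - b * ln b"
proof (cases "b = 0")
  case True then show ?thesis using assms by simp
next
  case False
  hence b: "b > 0" using assms by simp
  have "ln b \<le> ln (1/4)" using b assms by simp
  hence "1 + ln b \<le> 0" using ln_quarter by simp
  hence "(b - a) * (1 + ln b) \<le> 0" using assms by (simp add: mult_nonneg_nonpos)
  thus ?thesis using upper[of a b] assms b by simp
qed

lemma jensen_phi: fixes d :: "'y::finite \<Rightarrow> real" assumes "\<And>y. 0 \<le> d y"
  shows "(\<Sum>y\<in>UNIV. - d y * ln (d y)) \<le> real CARD('y) * (- ((\<Sum>y\<in>UNIV. d y) / CARD('y)) * ln ((\<Sum>y\<in>UNIV. d y) / CARD('y)))"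
proof -
  define m where "m = real CARD('y)"
  have m: "m > 0" unfolding m_def by simp
  define z where "z = (\<Sum>y\<in>UNIV. d y) / m"
  show ?thesis
  proof (cases "z = 0")
    case True
    hence "(\<Sum>y\<in>UNIV. d y) = 0" using m z_def by simp
    hence "\<forall>y. d y = 0" using assms by (simp add: sum_nonneg_eq_0_iff)
    thus ?thesis by simp
  next
    case False
    hence z: "z > 0" using assms m z_def by (simp add: sum_nonneg order_le_neq_trans)
    have "(\<Sum>y\<in>UNIV. d y * ln z + d y - z) \<le> (\<Sum>y\<in>UNIV. d y * ln (d y))"
      by (intro sum_mono tang assms z)
    moreover have "(\<Sum>y\<in>UNIV. d y * ln z + d y - z) = m * z * ln z"
      using m by (simp add: sum_subtractf sum.distrib sum_distrib_right[symmetric] z_def m_def)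
    ultimately have "m * z * ln z \<le> (\<Sum>y\<in>UNIV. d y * ln (d y))" by simp
    thus ?thesis by (simp add: m_def[symmetric] z_def[symmetric] sum_negf)
  qed
qed


lemma power_mean: fixes d :: "'a \<Rightarrow> real"
  assumes S: "finite S" and d: "\<And>i. i \<in> S \<Longrightarrow> 0 \<le> d i" and r: "1 \<le> r"
  shows "(\<Sum>i\<in>S. d i) \<le> real (card S) powr (1 - 1/r) * (\<Sum>i\<in>S. d i powr r) powr (1/r)"
proof -
  define S' where "S' = {i\<in>S. d i > 0}"
  have S'S: "S' \<subseteq> S" and fin: "finite S'" using S by (auto simp: S'_def)
  have eqA: "(\<Sum>i\<in>S. d i) = (\<Sum>i\<in>S'. d i)"
    using S d by (intro sum.mono_neutral_right) (auto simp: S'_def intro: antisym)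
  have eqB: "(\<Sum>i\<in>S. d i powr r) = (\<Sum>i\<in>S'. d i powr r)"
    using S d by (intro sum.mono_neutral_right) (auto simp: S'_def intro: antisym)
  define A where "A = (\<Sum>i\<in>S'. d i)"
  define B where "B = (\<Sum>i\<in>S'. d i powr r)"
  have B0: "0 \<le> B" unfolding B_def by (simp add: sum_nonneg)
  show ?thesis
  proof (cases "S' = {}")
    case True
    then show ?thesis using eqA by simp
  next
    case False
    define k where "k = real (card S')"
    have k: "k > 0" using False fin by (simp add: k_def card_gt_0_iff)
    have A0: "0 \<le> A" unfolding A_def S'_def by (rule sum_nonneg) simp
    have "(\<lambda>x. x powr r) (\<Sum>i\<in>S'. (1/k) *\<^sub>R d i) \<le> (\<Sum>i\<in>S'. (1/k) * (d i powr r))"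
      using fin False powr_convex[OF r] k by (intro convex_on_sum) (auto simp: S'_def k_def)
    hence J: "(A/k) powr r \<le> B/k"
      by (simp add: A_def B_def sum_distrib_left[symmetric] sum_divide_distrib[symmetric])
    have "A/k = ((A/k) powr r) powr (1/r)" using r A0 k by (simp add: powr_powr)
    also have "\<dots> \<le> (B/k) powr (1/r)" using J r A0 k by (intro powr_mono2) auto
    also have "\<dots> = B powr (1/r) / k powr (1/r)" using B0 k by (simp add: powr_divide)
    finally have "A \<le> k * (B powr (1/r) / k powr (1/r))" using k by (simp add: field_simps)
    also have "\<dots> = k powr (1 - 1/r) * B powr (1/r)" using k by (simp add: powr_diff)
    also have "\<dots> \<le> real (card S) powr (1 - 1/r) * B powr (1/r)"
      using k r S S'S unfolding k_def
      by (intro mult_right_mono powr_mono2) (auto intro: card_mono)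
    finally show ?thesis using eqA eqB A_def B_def by simp
  qed
qed


lemma inv_p_bounds: assumes "1 \<le> p" shows "0 \<le> inv_p p" "inv_p p \<le> 1"
  using assms by (cases p; auto simp: inv_p_def)+

lemma pnorm_bounds: fixes f :: "'x::finite \<Rightarrow> 'y::finite \<Rightarrow> real" assumes p: "1 \<le> p"
  shows "\<forall>x y. \<bar>f x y\<bar> \<le> pnorm p f"
    and "\<forall>x. (\<Sum>y\<in>UNIV. \<bar>f x y\<bar>) \<le> real CARD('y) powr (1 - inv_p p) * pnorm p f"
proof -
  have both: "(\<forall>x y. \<bar>f x y\<bar> \<le> pnorm p f) \<and>
     (\<forall>x. (\<Sum>y\<in>UNIV. \<bar>f x y\<bar>) \<le> real CARD('y) powr (1 - inv_p p) * pnorm p f)"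
  proof (cases "p = \<infinity>")
    case True
    have eq: "{\<bar>f x y\<bar> | x y. True} = (\<lambda>(x,y). \<bar>f x y\<bar>) ` UNIV" by auto
    have fin: "finite {\<bar>f x y\<bar> | x y. True}" unfolding eq by simp
    have a: "\<forall>x y. \<bar>f x y\<bar> \<le> pnorm p f"
      using True fin by (auto simp: pnorm_def intro!: Max_ge)
    have "\<forall>x. (\<Sum>y\<in>UNIV. \<bar>f x y\<bar>) \<le> real CARD('y) powr (1 - inv_p p) * pnorm p f"
    proof
      fix x
      have "(\<Sum>y\<in>UNIV. \<bar>f x y\<bar>) \<le> (\<Sum>y\<in>(UNIV::'y set). pnorm p f)" apply (rule sum_mono) using a apply simp done
      thus "(\<Sum>y\<in>UNIV. \<bar>f x y\<bar>) \<le> real CARD('y) powr (1 - inv_p p) * pnorm p f"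
        using True by (simp add: inv_p_def)
    qed
    with a show ?thesis by blast
  next
    case False
    then obtain r where pr: "p = ereal r" using p by (cases p) auto
    have r: "1 \<le> r" using p pr by simp
    define T where "T = (\<Sum>x\<in>UNIV. \<Sum>y\<in>UNIV. \<bar>f x y\<bar> powr r)"
    have pn: "pnorm p f = T powr (1/r)" using pr by (simp add: pnorm_def T_def)
    have ip: "inv_p p = 1/r" using pr by (simp add: inv_p_def)
    have rowT: "(\<Sum>y\<in>UNIV. \<bar>f x y\<bar> powr r) \<le> T" for x
      unfolding T_def by (rule member_le_sum) (auto intro: sum_nonneg)
    have ent: "\<bar>f x y\<bar> powr r \<le> T" for x y
      using rowT[of x] member_le_sum[of y UNIV "\<lambda>y. \<bar>f x y\<bar> powr r"] by auto
    have a: "\<forall>x y. \<bar>f x y\<bar> \<le> pnorm p f"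
    proof (intro allI)
      fix x y
      have "\<bar>f x y\<bar> = (\<bar>f x y\<bar> powr r) powr (1/r)" using r by (simp add: powr_powr)
      also have "\<dots> \<le> T powr (1/r)" using ent r by (intro powr_mono2) auto
      finally show "\<bar>f x y\<bar> \<le> pnorm p f" using pn by simp
    qed
    have "\<forall>x. (\<Sum>y\<in>UNIV. \<bar>f x y\<bar>) \<le> real CARD('y) powr (1 - inv_p p) * pnorm p f"
    proof
      fix x
      have "(\<Sum>y\<in>UNIV. \<bar>f x y\<bar>) \<le> real CARD('y) powr (1 - 1/r) * (\<Sum>y\<in>UNIV. \<bar>f x y\<bar> powr r) powr (1/r)"
        using power_mean[of UNIV "\<lambda>y. \<bar>f x y\<bar>" r] r by simp
      also have "\<dots> \<le> real CARD('y) powr (1 - 1/r) * T powr (1/r)"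
        using rowT[of x] r by (intro mult_left_mono powr_mono2) (auto intro: sum_nonneg)
      finally show "(\<Sum>y\<in>UNIV. \<bar>f x y\<bar>) \<le> real CARD('y) powr (1 - inv_p p) * pnorm p f"
        using pn ip by simp
    qed
    with a show ?thesis by blast
  qed
  from both show "\<forall>x y. \<bar>f x y\<bar> \<le> pnorm p f" by blast
  from both show "\<forall>x. (\<Sum>y\<in>UNIV. \<bar>f x y\<bar>) \<le> real CARD('y) powr (1 - inv_p p) * pnorm p f" by blast
qed

lemma f_p_alt: assumes "1 \<le> p" "0 < m"
  shows "f_p p m t = real m * (- (t / real m powr inv_p p) * ln (t / real m powr inv_p p))"
proof -
  have "real m powr (1 - inv_p p) = real m / real m powr inv_p p"
    using assms by (simp add: powr_diff)
  thus ?thesis unfolding f_p_def by (simp add: field_simps)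
qed

lemma lemmaB: fixes d :: "'y::finite \<Rightarrow> real"
  assumes p: "1 \<le> p" and d: "\<And>y. 0 \<le> d y" and D: "0 \<le> D" "D \<le> 1/4"
    and S: "(\<Sum>y\<in>UNIV. d y) \<le> real CARD('y) powr (1 - inv_p p) * D"
  shows "(\<Sum>y\<in>UNIV. - d y * ln (d y)) \<le> f_p p CARD('y) D"
proof -
  define m where "m = real CARD('y)"
  have m: "m \<ge> 1" unfolding m_def by simp
  define s where "s = m powr inv_p p"
  have s: "s \<ge> 1" unfolding s_def using m inv_p_bounds[OF p] by (simp add: ge_one_powr_ge_zero)
  define z where "z = (\<Sum>y\<in>UNIV. d y) / m"
  have z0: "0 \<le> z" unfolding z_def using d m by (simp add: sum_nonneg)
  have e: "m powr (1 - inv_p p) = m / s" using m by (simp add: powr_diff s_def)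
  have "(\<Sum>y\<in>UNIV. d y) \<le> (m/s) * D" using S e unfolding m_def by simp
  hence "z \<le> ((m/s) * D) / m" unfolding z_def using m by (intro divide_right_mono) auto
  hence "z \<le> D / s" using m by simp
  moreover have "D / s \<le> 1/4" using D s by (simp add: divide_le_eq)
  ultimately have "- z * ln z \<le> - (D/s) * ln (D/s)" using z0 phi_mono by blast
  hence "m * (- z * ln z) \<le> m * (- (D/s) * ln (D/s))" by (rule mult_left_mono) (use m in simp)
  moreover have "(\<Sum>y\<in>UNIV. - d y * ln (d y)) \<le> m * (- z * ln z)"
    using jensen_phi[of d] d unfolding m_def z_def by simp
  ultimately show ?thesis using f_p_alt[OF p, of "CARD('y)" D] unfolding m_def s_def by simp
qed


lemma eta_convex: "convex_on {0..} (\<lambda>t::real. t * ln t)"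
proof (rule convex_onI)
  fix t x y :: real assume t: "0 < t" "t < 1" and xy: "x \<in> {0..}" "y \<in> {0..}"
  define z where "z = (1 - t) * x + t * y"
  have x: "0 \<le> x" and y: "0 \<le> y" using xy by auto
  show "(\<lambda>t. t * ln t) ((1 - t) *\<^sub>R x + t *\<^sub>R y) \<le> (1 - t) * (\<lambda>t. t * ln t) x + t * (\<lambda>t. t * ln t) y"
  proof (cases "z = 0")
    case True
    have "(1-t) * x \<ge> 0" "t * y \<ge> 0" using t x y by auto
    hence "x = 0" "y = 0" using True t unfolding z_def by (auto simp: add_nonneg_eq_0_iff)
    thus ?thesis by simp
  next
    case False
    hence z: "z > 0" using t x y unfolding z_def by (smt (verit) mult_nonneg_nonneg)
    have "(1-t) * (x * ln z + x - z) \<le> (1-t) * (x * ln x)" using tang[OF x z] t by (intro mult_left_mono) auto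
    moreover have "t * (y * ln z + y - z) \<le> t * (y * ln y)" using tang[OF y z] t by (intro mult_left_mono) auto
    moreover have "(1-t) * (x * ln z + x - z) + t * (y * ln z + y - z) = z * ln z"
      by (simp add: z_def algebra_simps)
    ultimately show ?thesis by (simp add: z_def[symmetric])
  qed
qed (simp add: convex_real_interval)

lemma f_p_lin: assumes "1 \<le> p" "0 < m"
  shows "\<exists>c k. 0 \<le> c \<and> 0 \<le> k \<and> (\<forall>t\<ge>0. f_p p m t = k * t - c * (t * ln t))"
proof -
  define c where "c = real m powr (1 - inv_p p)"
  define s where "s = real m powr inv_p p"
  define k where "k = c * ln s"
  have c: "c \<ge> 0" unfolding c_def by simp
  have s: "s \<ge> 1" unfolding s_def using assms inv_p_bounds[OF assms(1)] by (simp add: ge_one_powr_ge_zero)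
  have k: "k \<ge> 0" unfolding k_def using c s by simp
  have "f_p p m t = k * t - c * (t * ln t)" if t: "t \<ge> 0" for t
  proof (cases "t = 0")
    case True then show ?thesis by (simp add: f_p_def)
  next
    case False
    hence "t > 0" using t by simp
    hence eq: "ln (t / s) = ln t - ln s" using s by (simp add: ln_div)
    have "f_p p m t = - t * c * ln (t/s)" unfolding f_p_def c_def s_def by (rule refl)
    also have "\<dots> = k * t - c * (t * ln t)" unfolding eq k_def by (simp add: algebra_simps)
    finally show ?thesis .
  qed
  thus ?thesis using c k by blast
qed

lemma f_p_concave: assumes "1 \<le> p" "0 < m" shows "concave_on {0..1/4} (f_p p m)"
proof -
  obtain c k where c: "0 \<le> c" and k: "0 \<le> k" and F: "\<And>t. t \<ge> 0 \<Longrightarrow> f_p p m t = k * t - c * (t * ln t)"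
    using f_p_lin[OF assms] by blast
  show ?thesis unfolding concave_on_def
  proof (rule convex_onI)
    fix t x y :: real assume t: "0 < t" "t < 1" and xy: "x \<in> {0..1/4}" "y \<in> {0..1/4}"
    have x: "0 \<le> x" and y: "0 \<le> y" using xy by auto
    define z where "z = (1 - t) * x + t * y"
    have z: "0 \<le> z" unfolding z_def using t x y by simp
    have "z * ln z \<le> (1 - t) * (x * ln x) + t * (y * ln y)"
      using convex_onD[OF eta_convex, of t x y] t x y by (simp add: z_def)
    hence "c * (z * ln z) \<le> c * ((1 - t) * (x * ln x) + t * (y * ln y))" using c by (rule mult_left_mono)
    moreover have "k * z = (1-t) * (k * x) + t * (k * y)" by (simp add: z_def algebra_simps)
    ultimately have ineq: "c * (z * ln z) - k * z \<le> (1-t) * (c * (x * ln x) - k * x) + t * (c * (y * ln y) - k * y)"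
      by (simp add: algebra_simps)
    have zz: "(1 - t) *\<^sub>R x + t *\<^sub>R y = z" by (simp add: z_def)
    show "- f_p p m ((1 - t) *\<^sub>R x + t *\<^sub>R y) \<le> (1 - t) * - f_p p m x + t * - f_p p m y"
      unfolding zz F[OF x] F[OF y] F[OF z] using ineq by (simp add: algebra_simps)
  qed (simp add: convex_real_interval)
qed

lemma f_p_mono: assumes "1 \<le> p" "0 < m" shows "mono_on {0..1/4} (f_p p m)"
proof -
  obtain c k where c: "0 \<le> c" and k: "0 \<le> k" and F: "\<And>t. t \<ge> 0 \<Longrightarrow> f_p p m t = k * t - c * (t * ln t)"
    using f_p_lin[OF assms] by blast
  show ?thesis
  proof (rule mono_onI)
    fix a b :: real assume ab: "a \<in> {0..1/4}" "b \<in> {0..1/4}" "a \<le> b"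
    have "- a * ln a \<le> - b * ln b" using phi_mono ab by auto
    hence "c * (- a * ln a) \<le> c * (- b * ln b)" using c by (rule mult_left_mono)
    moreover have "k * a \<le> k * b" using k ab by (simp add: mult_left_mono)
    ultimately show "f_p p m a \<le> f_p p m b"
      using F[of a] F[of b] ab by (simp add: algebra_simps)
  qed
qed

lemma decomp: fixes Q :: "'x::finite \<Rightarrow> real" and V :: "'x \<Rightarrow> 'y::finite \<Rightarrow> real"
  assumes Q: "\<forall>x. 0 \<le> Q x" and V: "\<forall>x y. 0 \<le> V x y"
  shows "false_MI Q V = (\<Sum>x\<in>UNIV. Q x * (\<Sum>y\<in>UNIV. V x y * ln (V x y)))
     - (\<Sum>y\<in>UNIV. (\<Sum>x\<in>UNIV. Q x * V x y) * ln (\<Sum>x\<in>UNIV. Q x * V x y))"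
proof -
  define P where "P y = (\<Sum>x\<in>UNIV. Q x * V x y)" for y
  have tm: "(if Q x * V x y = 0 then 0 else Q x * V x y * ln (V x y / P y))
     = Q x * (V x y * ln (V x y)) - Q x * V x y * ln (P y)" for x y
  proof (cases "Q x * V x y = 0")
    case True thus ?thesis by auto
  next
    case False
    hence pos: "Q x > 0" "V x y > 0" using Q V by (auto simp: order_le_neq_trans)
    have "Q x * V x y \<le> P y" unfolding P_def
      by (rule member_le_sum) (use Q V in auto)
    hence "P y > 0" using pos by (smt (verit) mult_pos_pos)
    hence eq: "ln (V x y / P y) = ln (V x y) - ln (P y)" using pos by (simp add: ln_div)
    show ?thesis using False unfolding eq by (simp add: algebra_simps)
  qed
  have "false_MI Q V = (\<Sum>x\<in>UNIV. \<Sum>y\<in>UNIV. Q x * (V x y * ln (V x y)) - Q x * V x y * ln (P y))"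
    unfolding false_MI_def P_def[symmetric] using tm by simp
  also have "\<dots> = (\<Sum>x\<in>UNIV. Q x * (\<Sum>y\<in>UNIV. V x y * ln (V x y)))
     - (\<Sum>x\<in>UNIV. \<Sum>y\<in>UNIV. Q x * V x y * ln (P y))"
    by (simp add: sum_subtractf sum_distrib_left)
  also have "(\<Sum>x\<in>UNIV. \<Sum>y\<in>UNIV. Q x * V x y * ln (P y)) = (\<Sum>y\<in>UNIV. P y * ln (P y))"
    by (subst sum.swap) (simp add: P_def sum_distrib_right)
  finally show ?thesis by (simp add: P_def)
qed


lemma phi_le1: "0 \<le> (t::real) \<Longrightarrow> - t * ln t \<le> 1"
  using tang[of t 1] by simp

lemma mainQ:
  fixes W Wt :: "'x::finite \<Rightarrow> 'y::finite \<Rightarrow> real" and p :: ereal and Q :: "'x \<Rightarrow> real"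
  assumes p: "1 \<le> p" and W: "is_channel W" and Wt: "is_false_channel Wt"
    and D: "pnorm p (\<lambda>x y. Wt x y - W x y) \<le> 1/4" and Q: "is_distr Q"
  shows "\<bar>false_MI Q Wt - MI Q W\<bar> \<le> 2 * f_p p CARD('y) (pnorm p (\<lambda>x y. Wt x y - W x y))"
proof -
  define d where "d = (\<lambda>x y. Wt x y - W x y)"
  define \<Delta> where "\<Delta> = pnorm p d"
  define F where "F = f_p p CARD('y) \<Delta>"
  define c where "c = real CARD('y) powr (1 - inv_p p)"
  have ent: "\<And>x y. \<bar>d x y\<bar> \<le> \<Delta>" using pnorm_bounds(1)[OF p, of d] \<Delta>_def by blast
  have row: "\<And>x. (\<Sum>y\<in>UNIV. \<bar>d x y\<bar>) \<le> c * \<Delta>" using pnorm_bounds(2)[OF p, of d] \<Delta>_def c_def by blast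
  have D4: "\<Delta> \<le> 1/4" using D unfolding \<Delta>_def d_def .
  have D0: "0 \<le> \<Delta>" using ent[of undefined undefined] by simp
  have W0: "\<And>x y. 0 \<le> W x y" and Wsum: "\<And>x. (\<Sum>y\<in>UNIV. W x y) = 1"
    using W by (auto simp: is_channel_def)
  have W1: "W x y \<le> 1" for x y
    using member_le_sum[of y UNIV "W x"] W0 Wsum[of x] by simp
  have Wt0: "\<And>x y. 0 \<le> Wt x y" using Wt by (auto simp: is_false_channel_def)
  have Q0: "\<And>x. 0 \<le> Q x" and Qsum: "(\<Sum>x\<in>UNIV. Q x) = 1" using Q by (auto simp: is_distr_def)
  define P where "P y = (\<Sum>x\<in>UNIV. Q x * W x y)" for y
  define Pt where "Pt y = (\<Sum>x\<in>UNIV. Q x * Wt x y)" for y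
  define e where "e y = Pt y - P y" for y
  have e_eq: "e y = (\<Sum>x\<in>UNIV. Q x * d x y)" for y
    by (simp add: e_def P_def Pt_def d_def sum_subtractf right_diff_distrib)
  have e_abs: "\<bar>e y\<bar> \<le> (\<Sum>x\<in>UNIV. Q x * \<bar>d x y\<bar>)" for y
    unfolding e_eq by (rule order_trans[OF sum_abs]) (simp add: abs_mult Q0)
  have e_le: "\<bar>e y\<bar> \<le> \<Delta>" for y
  proof -
    have "(\<Sum>x\<in>UNIV. Q x * \<bar>d x y\<bar>) \<le> (\<Sum>x\<in>UNIV. Q x * \<Delta>)"
      by (rule sum_mono) (simp add: Q0 ent mult_left_mono)
    thus ?thesis using e_abs[of y] Qsum by (simp add: sum_distrib_right[symmetric])
  qed
  have P0: "0 \<le> P y" for y unfolding P_def by (simp add: sum_nonneg Q0 W0)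
  have Pt0: "0 \<le> Pt y" for y unfolding Pt_def by (simp add: sum_nonneg Q0 Wt0)
  have P1: "P y \<le> 1" for y
  proof -
    have "P y \<le> (\<Sum>x\<in>UNIV. Q x * 1)" unfolding P_def
      by (rule sum_mono) (use Q0 W1 in \<open>simp add: mult_left_le\<close>)
    thus ?thesis using Qsum by simp
  qed
  have esum: "(\<Sum>y\<in>UNIV. \<bar>e y\<bar>) \<le> c * \<Delta>"
  proof -
    have "(\<Sum>y\<in>UNIV. \<bar>e y\<bar>) \<le> (\<Sum>y\<in>UNIV. \<Sum>x\<in>UNIV. Q x * \<bar>d x y\<bar>)"
      by (rule sum_mono) (rule e_abs)
    also have "\<dots> = (\<Sum>x\<in>UNIV. Q x * (\<Sum>y\<in>UNIV. \<bar>d x y\<bar>))"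
      by (subst sum.swap) (simp add: sum_distrib_left)
    also have "\<dots> \<le> (\<Sum>x\<in>UNIV. Q x * (c * \<Delta>))"
      by (rule sum_mono) (simp add: Q0 row mult_left_mono)
    also have "\<dots> = c * \<Delta>" using Qsum by (simp add: sum_distrib_right[symmetric])
    finally show ?thesis .
  qed
  have rowF: "(\<Sum>y\<in>UNIV. - \<bar>d x y\<bar> * ln \<bar>d x y\<bar>) \<le> F" for x
    unfolding F_def using lemmaB[OF p, of "\<lambda>y. \<bar>d x y\<bar>" \<Delta>] D0 D4 row[of x] c_def by simp
  have eF: "(\<Sum>y\<in>UNIV. - \<bar>e y\<bar> * ln \<bar>e y\<bar>) \<le> F"
    unfolding F_def using lemmaB[OF p, of "\<lambda>y. \<bar>e y\<bar>" \<Delta>] D0 D4 esum c_def by simp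
  have termW: "\<bar>Wt x y * ln (Wt x y) - W x y * ln (W x y)\<bar> \<le> - \<bar>d x y\<bar> * ln \<bar>d x y\<bar>" for x y
  proof -
    have "\<bar>Wt x y - W x y\<bar> \<le> 1/4" using ent[of x y] D4 d_def by simp
    moreover have "Wt x y \<le> 5/4" using ent[of x y] D4 W1[of x y] unfolding d_def by simp
    ultimately show ?thesis using contA[of "W x y" "Wt x y"] W0 Wt0 W1[of x y] unfolding d_def by simp
  qed
  have termP: "\<bar>Pt y * ln (Pt y) - P y * ln (P y)\<bar> \<le> - \<bar>e y\<bar> * ln \<bar>e y\<bar>" for y
  proof -
    have "\<bar>Pt y - P y\<bar> \<le> 1/4" using e_le[of y] D4 e_def by simp
    moreover have "Pt y \<le> 5/4" using e_le[of y] D4 P1[of y] unfolding e_def by simp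
    ultimately show ?thesis using contA[of "P y" "Pt y"] P0 Pt0 P1[of y] unfolding e_def by simp
  qed
  have dec: "false_MI Q Wt - MI Q W =
      (\<Sum>x\<in>UNIV. Q x * (\<Sum>y\<in>UNIV. Wt x y * ln (Wt x y) - W x y * ln (W x y)))
      - (\<Sum>y\<in>UNIV. Pt y * ln (Pt y) - P y * ln (P y))"
    unfolding MI_def decomp[of Q Wt, OF _ ] decomp[of Q W]
    using Q0 W0 Wt0
    by (simp add: decomp P_def Pt_def sum_subtractf right_diff_distrib)
  have A1: "\<bar>\<Sum>x\<in>UNIV. Q x * (\<Sum>y\<in>UNIV. Wt x y * ln (Wt x y) - W x y * ln (W x y))\<bar> \<le> F"
  proof -
    have "\<bar>\<Sum>x\<in>UNIV. Q x * (\<Sum>y\<in>UNIV. Wt x y * ln (Wt x y) - W x y * ln (W x y))\<bar>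
        \<le> (\<Sum>x\<in>UNIV. \<bar>Q x * (\<Sum>y\<in>UNIV. Wt x y * ln (Wt x y) - W x y * ln (W x y))\<bar>)"
      by (rule sum_abs)
    also have "\<dots> \<le> (\<Sum>x\<in>UNIV. Q x * F)"
    proof (rule sum_mono)
      fix x
      have "\<bar>\<Sum>y\<in>UNIV. Wt x y * ln (Wt x y) - W x y * ln (W x y)\<bar>
          \<le> (\<Sum>y\<in>UNIV. \<bar>Wt x y * ln (Wt x y) - W x y * ln (W x y)\<bar>)" by (rule sum_abs)
      also have "\<dots> \<le> (\<Sum>y\<in>UNIV. - \<bar>d x y\<bar> * ln \<bar>d x y\<bar>)" by (rule sum_mono) (rule termW)
      also have "\<dots> \<le> F" by (rule rowF)
      finally show "\<bar>Q x * (\<Sum>y\<in>UNIV. Wt x y * ln (Wt x y) - W x y * ln (W x y))\<bar> \<le> Q x * F"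
        using Q0[of x] by (simp add: abs_mult mult_left_mono)
    qed
    also have "\<dots> = F" using Qsum by (simp add: sum_distrib_right[symmetric])
    finally show ?thesis .
  qed
  have A2: "\<bar>\<Sum>y\<in>UNIV. Pt y * ln (Pt y) - P y * ln (P y)\<bar> \<le> F"
  proof -
    have "\<bar>\<Sum>y\<in>UNIV. Pt y * ln (Pt y) - P y * ln (P y)\<bar>
        \<le> (\<Sum>y\<in>UNIV. \<bar>Pt y * ln (Pt y) - P y * ln (P y)\<bar>)" by (rule sum_abs)
    also have "\<dots> \<le> (\<Sum>y\<in>UNIV. - \<bar>e y\<bar> * ln \<bar>e y\<bar>)" by (rule sum_mono) (rule termP)
    also have "\<dots> \<le> F" by (rule eF)
    finally show ?thesis .
  qed
  have "\<bar>false_MI Q Wt - MI Q W\<bar> \<le> 2 * F" unfolding dec using A1 A2 by linarith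
  thus ?thesis unfolding F_def \<Delta>_def d_def .
qed


lemma MI_le: fixes W :: "'x::finite \<Rightarrow> 'y::finite \<Rightarrow> real"
  assumes W: "is_channel W" and Q: "is_distr Q"
  shows "MI Q W \<le> real CARD('y)"
proof -
  have W0: "\<And>x y. 0 \<le> W x y" and Wsum: "\<And>x. (\<Sum>y\<in>UNIV. W x y) = 1"
    using W by (auto simp: is_channel_def)
  have W1: "W x y \<le> 1" for x y
    using member_le_sum[of y UNIV "W x"] W0 Wsum[of x] by simp
  have Q0: "\<And>x. 0 \<le> Q x" using Q by (auto simp: is_distr_def)
  have t1: "(\<Sum>x\<in>UNIV. Q x * (\<Sum>y\<in>UNIV. W x y * ln (W x y))) \<le> 0"
  proof (rule sum_nonpos)
    fix x
    have "(\<Sum>y\<in>UNIV. W x y * ln (W x y)) \<le> 0"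
    proof (rule sum_nonpos)
      fix y show "W x y * ln (W x y) \<le> 0"
        using W0[of x y] W1[of x y] by (cases "W x y = 0") (auto intro: mult_nonneg_nonpos)
    qed
    thus "Q x * (\<Sum>y\<in>UNIV. W x y * ln (W x y)) \<le> 0" using Q0[of x] by (simp add: mult_nonneg_nonpos)
  qed
  have t2: "- (\<Sum>y\<in>UNIV. (\<Sum>x\<in>UNIV. Q x * W x y) * ln (\<Sum>x\<in>UNIV. Q x * W x y)) \<le> (\<Sum>y\<in>(UNIV::'y set). 1)"
    unfolding sum_negf[symmetric] proof (rule sum_mono)
    fix y
    have "0 \<le> (\<Sum>x\<in>UNIV. Q x * W x y)" by (rule sum_nonneg) (simp add: Q0 W0)
    from phi_le1[OF this] show "- ((\<Sum>x\<in>UNIV. Q x * W x y) * ln (\<Sum>x\<in>UNIV. Q x * W x y)) \<le> 1" by simp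
  qed
  show ?thesis unfolding MI_def decomp[of Q W, OF allI[OF Q0] W0[THEN allI, THEN allI]]
    using t1 t2 by simp
qed

theorem lemma8:
  fixes W Wt :: "'x::finite \<Rightarrow> 'y::finite \<Rightarrow> real" and p :: ereal
  assumes "1 \<le> p" and "is_channel W" and "is_false_channel Wt"
  shows "(pnorm p (\<lambda>x y. Wt x y - W x y) \<le> 1/4 \<longrightarrow>
           (\<forall>Q. is_distr Q \<longrightarrow>
              \<bar>false_MI Q Wt - MI Q W\<bar>
                \<le> 2 * f_p p CARD('y) (pnorm p (\<lambda>x y. Wt x y - W x y))) \<and>
           \<bar>false_capacity Wt - capacity W\<bar>
                \<le> 2 * f_p p CARD('y) (pnorm p (\<lambda>x y. Wt x y - W x y)))
         \<and> concave_on {0..1/4} (f_p p CARD('y))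
         \<and> mono_on {0..1/4} (f_p p CARD('y))"
proof (intro conjI impI)
  show "concave_on {0..1/4} (f_p p CARD('y))" using f_p_concave[OF assms(1)] by simp
  show "mono_on {0..1/4} (f_p p CARD('y))" using f_p_mono[OF assms(1)] by simp
  assume D: "pnorm p (\<lambda>x y. Wt x y - W x y) \<le> 1/4"
  define B where "B = 2 * f_p p CARD('y) (pnorm p (\<lambda>x y. Wt x y - W x y))"
  have M: "\<And>Q. is_distr Q \<Longrightarrow> \<bar>false_MI Q Wt - MI Q W\<bar> \<le> B"
    unfolding B_def using mainQ[OF assms D] by blast
  thus "\<forall>Q. is_distr Q \<longrightarrow> \<bar>false_MI Q Wt - MI Q W\<bar> \<le> 2 * f_p p CARD('y) (pnorm p (\<lambda>x y. Wt x y - W x y))"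
    unfolding B_def by blast
  define S where "S = {Q :: 'x \<Rightarrow> real. is_distr Q}"
  have ne: "S \<noteq> {}"
  proof -
    have "is_distr (\<lambda>x::'x. 1 / real CARD('x))" unfolding is_distr_def by simp
    thus ?thesis unfolding S_def by blast
  qed
  have bdd1: "bdd_above ((\<lambda>Q. MI Q W) ` S)"
    using MI_le[OF assms(2)] unfolding S_def by (intro bdd_aboveI2) auto
  have bdd2: "bdd_above ((\<lambda>Q. false_MI Q Wt) ` S)"
  proof (rule bdd_aboveI2)
    fix Q assume "Q \<in> S"
    hence "is_distr Q" by (simp add: S_def)
    thus "false_MI Q Wt \<le> real CARD('y) + B" using M MI_le[OF assms(2)] by fastforce
  qed
  have c1: "false_capacity Wt \<le> capacity W + B"
    unfolding false_capacity_def capacity_def S_def[symmetric]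
  proof (rule cSUP_least[OF ne])
    fix Q assume Q: "Q \<in> S"
    have "MI Q W \<le> (SUP Q\<in>S. MI Q W)" by (rule cSUP_upper[OF Q bdd1])
    thus "false_MI Q Wt \<le> (SUP Q\<in>S. MI Q W) + B" using M[of Q] Q by (auto simp: S_def)
  qed
  have c2: "capacity W \<le> false_capacity Wt + B"
    unfolding false_capacity_def capacity_def S_def[symmetric]
  proof (rule cSUP_least[OF ne])
    fix Q assume Q: "Q \<in> S"
    have "false_MI Q Wt \<le> (SUP Q\<in>S. false_MI Q Wt)" by (rule cSUP_upper[OF Q bdd2])
    thus "MI Q W \<le> (SUP Q\<in>S. false_MI Q Wt) + B" using M[of Q] Q by (auto simp: S_def)
  qed
  show "\<bar>false_capacity Wt - capacity W\<bar> \<le> 2 * f_p p CARD('y) (pnorm p (\<lambda>x y. Wt x y - W x y))"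
    using c1 c2 unfolding B_def by linarith
qed

end
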